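(* Let $(Q,P)$ be a weakly quasi-lattice ordered group and let $\Lambda$ be a $P$-graph with $\mathrm{FA}(\Lambda)\neq\emptyset$. Then the path space $\mathcal{X}(\Lambda)$ and the boundary-path space $\partial\mathcal{X}(\Lambda)$ are Hausdorff and each has a countable basis consisting of compact sets. Moreover, $\mathcal{X}(\Lambda)$ is open in $\mathcal{F}(\Lambda)$.
   Context: A weakly quasi-lattice ordered group $(Q,P)$ consists of a discrete group $Q$ and a subsemigroup $P\subseteq Q$ containing the identity $e$ with $P\cap P^{-1}=\{e\}$, such that, with $p\le r$ meaning $pq=r$ for some $q\in P$, any two elements of $P$ having a common upper bound in $P$ have a least common upper bound. A $P$-graph is a countable small category $\Lambda$ (identity morphisms $\Lambda^{(0)}$, range and source maps $r,s$, composite $\mu\nu$ defined when $s(\mu)=r(\nu)$) with a functor $d:\Lambda\to P$ satisfying unique factorisation: whenever $d(\lambda)=pq$ with $p,q\in P$ there are unique $\mu,\nu\in\Lambda$ with $\lambda=\mu\nu$, $d(\mu)=p$, $d(\nu)=q$. Write $\lambda\Lambda=\{\lambda\mu:\mu\in\Lambda,\ s(\lambda)=r(\mu)\}$ and $\mu\preceq\lambda$ if $\lambda=\mu\nu$ for some $\nu\in\Lambda$. $\Lambda$ is finitely aligned at $(\mu,\nu)$ if there is a finite (possibly empty) $J\subseteq\Lambda$ with $\mu\Lambda\cap\nu\Lambda=\bigcup_{\lambda\in J}\lambda\Lambda$; $\Lambda$ is finitely aligned at $\lambda$ if it is finitely aligned at $(\mu,\nu)$ for all $\mu\in\lambda\Lambda$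 and $\nu\in\Lambda$; $\mathrm{FA}(\Lambda)$ is the set of $\lambda\in\Lambda$ at which $\Lambda$ is finitely aligned. The power set $\mathcal{P}(\Lambda)$ carries the product topology from its identification with $\prod_{\lambda\in\Lambda}\{0,1\}$ (each factor discrete); a basis is given by the sets $\{x\subseteq\Lambda: K_1\subseteq x\subseteq\Lambda\setminus K_2\}$ for finite $K_1,K_2\subseteq\Lambda$. Subsets of $\mathcal{P}(\Lambda)$ carry the subspace topology. A filter is a nonempty $x\subseteq\Lambda$ that is hereditary ($\lambda\preceq\mu\in x$ implies $\lambda\in x$) and directed ($\mu,\nu\in x$ implies there is $\lambda\in x$ with $\mu,\nu\preceq\lambda$); $\mathcal{F}(\Lambda)$ is the set of filters and $\mathcal{U}(\Lambda)$ the set of ultrafilters (filters maximal under inclusion). The path space is $\mathcal{X}(\Lambda)=\{x\in\mathcal{F}(\Lambda): x\cap\mathrm{FA}(\Lambda)\neq\emptyset\}$, and the boundary-path space $\partial\mathcal{X}(\Lambda)$ is the closure of $\mathcal{U}(\Lambda)\cap\mathcal{X}(\Lambda)$ in $\mathcal{X}(\Lambda)$. *)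

theory Defs
  imports "HOL-Analysis.Analysis" "HOL-Algebra.Group"
begin

definition pleq :: "('g, 'z) monoid_scheme \<Rightarrow> 'g set \<Rightarrow> 'g \<Rightarrow> 'g \<Rightarrow> bool" where
  "pleq Q P p r \<longleftrightarrow> (\<exists>q\<in>P. p \<otimes>\<^bsub>Q\<^esub> q = r)"

definition wqlo :: "('g, 'z) monoid_scheme \<Rightarrow> 'g set \<Rightarrow> bool" where
  "wqlo Q P \<longleftrightarrow> group Q \<and> P \<subseteq> carrier Q \<and> \<one>\<^bsub>Q\<^esub> \<in> P
     \<and> (\<forall>p\<in>P. \<forall>q\<in>P. p \<otimes>\<^bsub>Q\<^esub> q \<in> P)
     \<and> P \<inter> (\<lambda>p. inv\<^bsub>Q\<^esub> p) ` P = {\<one>\<^bsub>Q\<^esub>}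
     \<and> (\<forall>p\<in>P. \<forall>q\<in>P. (\<exists>u\<in>P. pleq Q P p u \<and> pleq Q P q u) \<longrightarrow>
          (\<exists>l\<in>P. pleq Q P p l \<and> pleq Q P q l \<and>
              (\<forall>u\<in>P. pleq Q P p u \<and> pleq Q P q u \<longrightarrow> pleq Q P l u)))"

text \<open>A small category is given by its set of morphisms L, its set of identity
  morphisms L0 (a subset of L), range and source maps r, s and a composition
  cmp, where cmp mu nu is defined (meaningful) when s mu = r nu.
  d is the degree functor into P.\<close>

definition P_graph ::
  "('g, 'z) monoid_scheme \<Rightarrow> 'g set \<Rightarrow> 'a set \<Rightarrow> 'a set \<Rightarrow> ('a \<Rightarrow> 'a) \<Rightarrow> ('a \<Rightarrow> 'a)
     \<Rightarrow> ('a \<Rightarrow> 'a \<Rightarrow> 'a) \<Rightarrow> ('a \<Rightarrow> 'g) \<Rightarrow> bool" where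
  "P_graph Q P L L0 r s cmp d \<longleftrightarrow>
     countable L \<and> L0 \<subseteq> L
     \<and> (\<forall>l\<in>L. r l \<in> L0 \<and> s l \<in> L0)
     \<and> (\<forall>v\<in>L0. r v = v \<and> s v = v)
     \<and> (\<forall>m\<in>L. \<forall>n\<in>L. s m = r n \<longrightarrow>
           cmp m n \<in> L \<and> r (cmp m n) = r m \<and> s (cmp m n) = s n)
     \<and> (\<forall>l\<in>L. cmp (r l) l = l \<and> cmp l (s l) = l)
     \<and> (\<forall>a\<in>L. \<forall>b\<in>L. \<forall>c\<in>L. s a = r b \<and> s b = r c \<longrightarrow>
           cmp (cmp a b) c = cmp a (cmp b c))
     \<and> (\<forall>l\<in>L. d l \<in> P)
     \<and> (\<forall>m\<in>L. \<forall>n\<in>L. s m = r n \<longrightarrow> d (cmp m n) = d m \<otimes>\<^bsub>Q\<^esub> d n)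
     \<and> (\<forall>l\<in>L. \<forall>p\<in>P. \<forall>q\<in>P. d l = p \<otimes>\<^bsub>Q\<^esub> q \<longrightarrow>
           (\<exists>!mn. fst mn \<in> L \<and> snd mn \<in> L \<and> s (fst mn) = r (snd mn)
                  \<and> l = cmp (fst mn) (snd mn) \<and> d (fst mn) = p \<and> d (snd mn) = q))"

definition ext_set :: "'a set \<Rightarrow> ('a \<Rightarrow> 'a) \<Rightarrow> ('a \<Rightarrow> 'a) \<Rightarrow> ('a \<Rightarrow> 'a \<Rightarrow> 'a) \<Rightarrow> 'a \<Rightarrow> 'a set" where
  "ext_set L r s cmp l = {cmp l m | m. m \<in> L \<and> s l = r m}"

definition prefix_of :: "'a set \<Rightarrow> ('a \<Rightarrow> 'a) \<Rightarrow> ('a \<Rightarrow> 'a) \<Rightarrow> ('a \<Rightarrow> 'a \<Rightarrow> 'a) \<Rightarrow> 'a \<Rightarrow> 'a \<Rightarrow> bool" where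
  "prefix_of L r s cmp m l \<longleftrightarrow> (\<exists>n\<in>L. s m = r n \<and> l = cmp m n)"

definition fin_aligned_pair :: "'a set \<Rightarrow> ('a \<Rightarrow> 'a) \<Rightarrow> ('a \<Rightarrow> 'a) \<Rightarrow> ('a \<Rightarrow> 'a \<Rightarrow> 'a) \<Rightarrow> 'a \<Rightarrow> 'a \<Rightarrow> bool" where
  "fin_aligned_pair L r s cmp m n \<longleftrightarrow>
     (\<exists>J. finite J \<and> J \<subseteq> L \<and>
        ext_set L r s cmp m \<inter> ext_set L r s cmp n = (\<Union>l\<in>J. ext_set L r s cmp l))"

definition fin_aligned_at :: "'a set \<Rightarrow> ('a \<Rightarrow> 'a) \<Rightarrow> ('a \<Rightarrow> 'a) \<Rightarrow> ('a \<Rightarrow> 'a \<Rightarrow> 'a) \<Rightarrow> 'a \<Rightarrow> bool" where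
  "fin_aligned_at L r s cmp l \<longleftrightarrow>
     (\<forall>m\<in>ext_set L r s cmp l. \<forall>n\<in>L. fin_aligned_pair L r s cmp m n)"

definition FA :: "'a set \<Rightarrow> ('a \<Rightarrow> 'a) \<Rightarrow> ('a \<Rightarrow> 'a) \<Rightarrow> ('a \<Rightarrow> 'a \<Rightarrow> 'a) \<Rightarrow> 'a set" where
  "FA L r s cmp = {l \<in> L. fin_aligned_at L r s cmp l}"

definition is_filter :: "'a set \<Rightarrow> ('a \<Rightarrow> 'a) \<Rightarrow> ('a \<Rightarrow> 'a) \<Rightarrow> ('a \<Rightarrow> 'a \<Rightarrow> 'a) \<Rightarrow> 'a set \<Rightarrow> bool" where
  "is_filter L r s cmp x \<longleftrightarrow> x \<subseteq> L \<and> x \<noteq> {}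
     \<and> (\<forall>l\<in>L. \<forall>m\<in>x. prefix_of L r s cmp l m \<longrightarrow> l \<in> x)
     \<and> (\<forall>m\<in>x. \<forall>n\<in>x. \<exists>l\<in>x. prefix_of L r s cmp m l \<and> prefix_of L r s cmp n l)"

definition filters :: "'a set \<Rightarrow> ('a \<Rightarrow> 'a) \<Rightarrow> ('a \<Rightarrow> 'a) \<Rightarrow> ('a \<Rightarrow> 'a \<Rightarrow> 'a) \<Rightarrow> 'a set set" where
  "filters L r s cmp = {x. is_filter L r s cmp x}"

definition ultrafilters :: "'a set \<Rightarrow> ('a \<Rightarrow> 'a) \<Rightarrow> ('a \<Rightarrow> 'a) \<Rightarrow> ('a \<Rightarrow> 'a \<Rightarrow> 'a) \<Rightarrow> 'a set set" where
  "ultrafilters L r s cmp = {x \<in> filters L r s cmp.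
      \<forall>y\<in>filters L r s cmp. x \<subseteq> y \<longrightarrow> y = x}"

definition path_space :: "'a set \<Rightarrow> ('a \<Rightarrow> 'a) \<Rightarrow> ('a \<Rightarrow> 'a) \<Rightarrow> ('a \<Rightarrow> 'a \<Rightarrow> 'a) \<Rightarrow> 'a set set" where
  "path_space L r s cmp = {x \<in> filters L r s cmp. x \<inter> FA L r s cmp \<noteq> {}}"

definition powerset_top :: "'a set \<Rightarrow> 'a set topology" where
  "powerset_top L = pullback_topology (Pow L) (\<lambda>x. restrict (\<lambda>l. l \<in> x) L)
      (product_topology (\<lambda>_. discrete_topology (UNIV :: bool set)) L)"

definition boundary_path_space :: "'a set \<Rightarrow> ('a \<Rightarrow> 'a) \<Rightarrow> ('a \<Rightarrow> 'a) \<Rightarrow> ('a \<Rightarrow> 'a \<Rightarrow> 'a) \<Rightarrow> 'a set set" where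
  "boundary_path_space L r s cmp =
     (subtopology (powerset_top L) (path_space L r s cmp)) closure_of
        (ultrafilters L r s cmp \<inter> path_space L r s cmp)"

definition has_countable_compact_basis :: "'b topology \<Rightarrow> bool" where
  "has_countable_compact_basis T \<longleftrightarrow>
     (\<exists>B. countable B \<and> (\<forall>b\<in>B. openin T b \<and> compactin T b)
        \<and> (\<forall>U. openin T U \<longrightarrow> (\<forall>x\<in>U. \<exists>b\<in>B. x \<in> b \<and> b \<subseteq> U)))"

end

theory Submission
  imports Defs
begin

definition chr :: "'a set \<Rightarrow> 'a set \<Rightarrow> 'a \<Rightarrow> bool" where
  "chr L x = restrict (\<lambda>l. l \<in> x) L"

abbreviation PT :: "'a set \<Rightarrow> ('a \<Rightarrow> bool) topology" where
  "PT L \<equiv> product_topology (\<lambda>_. discrete_topology (UNIV :: bool set)) L"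

lemma pt_eq: "powerset_top L = pullback_topology (Pow L) (chr L) (PT L)"
  unfolding powerset_top_def chr_def by simp

lemma topspace_pt[simp]: "topspace (powerset_top L) = Pow L"
  unfolding pt_eq topspace_pullback_topology by (auto simp: chr_def)

lemma cyl_open:
  assumes "finite K1" "finite K2" "K1 \<subseteq> L" "K2 \<subseteq> L"
  shows "openin (powerset_top L) {y \<in> Pow L. K1 \<subseteq> y \<and> K2 \<inter> y = {}}"
proof -
  define U where "U = {f \<in> PiE L (\<lambda>_. UNIV). (\<forall>a\<in>K1. f a) \<and> (\<forall>a\<in>K2. \<not> f a)}"
  have "openin (PT L) U"
    unfolding openin_product_topology_alt
  proof
    fix f assume f: "f \<in> U"
    define W where "W = (\<lambda>i. if i \<in> K1 \<union> K2 then {f i} else (UNIV :: bool set))"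
    have "finite {i \<in> L. W i \<noteq> topspace (discrete_topology UNIV)}"
      by (rule finite_subset[of _ "K1 \<union> K2"]) (auto simp: W_def assms)
    moreover have "f \<in> PiE L W" using f by (auto simp: U_def W_def)
    moreover have "PiE L W \<subseteq> U" using f assms by (auto simp: U_def W_def PiE_iff split: if_splits) (metis in_mono)+
    ultimately show "\<exists>W. finite {i \<in> L. W i \<noteq> topspace (discrete_topology UNIV)} \<and>
          (\<forall>i\<in>L. openin (discrete_topology UNIV) (W i)) \<and> f \<in> PiE L W \<and> PiE L W \<subseteq> U"
      by auto
  qed
  moreover have "{y \<in> Pow L. K1 \<subseteq> y \<and> K2 \<inter> y = {}} = chr L -` U \<inter> Pow L"
    using assms by (auto simp: U_def chr_def)
  ultimately show ?thesis unfolding pt_eq openin_pullback_topology by blast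
qed

lemma basis_extract:
  assumes "openin (powerset_top L) T" "x \<in> T"
  shows "\<exists>K1 K2. finite K1 \<and> finite K2 \<and> K1 \<subseteq> x \<and> K2 \<subseteq> L - x \<and>
           (\<forall>y\<in>Pow L. K1 \<subseteq> y \<and> K2 \<inter> y = {} \<longrightarrow> y \<in> T)"
proof -
  obtain V where V: "openin (PT L) V" "T = chr L -` V \<inter> Pow L"
    using assms(1) unfolding pt_eq openin_pullback_topology by blast
  have xL: "x \<subseteq> L" "chr L x \<in> V" using assms(2) V by auto
  then have "\<exists>W. finite {i \<in> L. W i \<noteq> topspace (discrete_topology (UNIV::bool set))} \<and>
        (\<forall>i\<in>L. openin (discrete_topology UNIV) (W i)) \<and> chr L x \<in> PiE L W \<and> PiE L W \<subseteq> V"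
    using V(1) unfolding openin_product_topology_alt by blast
  then obtain W where W: "finite {i \<in> L. W i \<noteq> UNIV}" "chr L x \<in> PiE L W" "PiE L W \<subseteq> V"
    by auto
  define K1 where "K1 = {i \<in> L. W i \<noteq> UNIV \<and> i \<in> x}"
  define K2 where "K2 = {i \<in> L. W i \<noteq> UNIV \<and> i \<notin> x}"
  have "\<forall>y\<in>Pow L. K1 \<subseteq> y \<and> K2 \<inter> y = {} \<longrightarrow> y \<in> T"
  proof (intro ballI impI)
    fix y assume y: "y \<in> Pow L" "K1 \<subseteq> y \<and> K2 \<inter> y = {}"
    have "chr L y \<in> PiE L W"
    proof (rule PiE_I)
      fix i assume i: "i \<in> L"
      show "chr L y i \<in> W i"
      proof (cases "W i = UNIV")
        case False
        then have "(i \<in> y) = (i \<in> x)" using y i unfolding K1_def K2_def by blast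
        moreover have "chr L x i \<in> W i" using W(2) i by auto
        ultimately show ?thesis using i by (simp add: chr_def)
      qed simp
    qed (auto simp: chr_def)
    then show "y \<in> T" using W(3) V(2) y by auto
  qed
  moreover have "finite K1" using W(1) by (rule rev_finite_subset) (auto simp: K1_def)
  moreover have "finite K2" using W(1) by (rule rev_finite_subset) (auto simp: K2_def)
  moreover have "K1 \<subseteq> x" "K2 \<subseteq> L - x" unfolding K1_def K2_def by auto
  ultimately show ?thesis by blast
qed

lemma closed_crit:
  assumes "S \<subseteq> Pow L"
    and "\<And>x. x \<in> Pow L \<Longrightarrow> x \<notin> S \<Longrightarrow> \<exists>K1 K2. finite K1 \<and> finite K2 \<and> K1 \<subseteq> x \<and> K2 \<subseteq> L - x \<and>
           (\<forall>y\<in>Pow L. K1 \<subseteq> y \<and> K2 \<inter> y = {} \<longrightarrow> y \<notin> S)"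
  shows "closedin (powerset_top L) S"
proof -
  have "openin (powerset_top L) (Pow L - S)"
    unfolding openin_subopen[of _ "Pow L - S"]
  proof (intro ballI)
    fix x assume x: "x \<in> Pow L - S"
    have "\<exists>K1 K2. finite K1 \<and> finite K2 \<and> K1 \<subseteq> x \<and> K2 \<subseteq> L - x \<and>
           (\<forall>y\<in>Pow L. K1 \<subseteq> y \<and> K2 \<inter> y = {} \<longrightarrow> y \<notin> S)"
      using x by (intro assms(2)) simp_all
    then obtain K1 K2 where K: "finite K1" "finite K2" "K1 \<subseteq> x" "K2 \<subseteq> L - x"
       "\<forall>y\<in>Pow L. K1 \<subseteq> y \<and> K2 \<inter> y = {} \<longrightarrow> y \<notin> S" by blast
    have "K1 \<subseteq> L" using K(3) x by blast
    have "K2 \<subseteq> L" using K(4) by blast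
    have o: "openin (powerset_top L) {y \<in> Pow L. K1 \<subseteq> y \<and> K2 \<inter> y = {}}"
      by (rule cyl_open) (use K \<open>K1 \<subseteq> L\<close> \<open>K2 \<subseteq> L\<close> in auto)
    have "x \<in> {y \<in> Pow L. K1 \<subseteq> y \<and> K2 \<inter> y = {}}" using x K(3,4) by blast
    moreover have "{y \<in> Pow L. K1 \<subseteq> y \<and> K2 \<inter> y = {}} \<subseteq> Pow L - S" using K(5) by blast
    ultimately show "\<exists>T. openin (powerset_top L) T \<and> x \<in> T \<and> T \<subseteq> Pow L - S"
      using o by blast
  qed
  then show ?thesis unfolding closedin_def topspace_pt using assms(1) by blast
qed

lemma compact_pt: "compact_space (powerset_top L)"
proof -
  define g where "g = (\<lambda>F. {l \<in> L. F l})"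
  have cs: "compact_space (PT L)"
    by (simp add: compact_space_product_topology compact_space_discrete_topology)
  have eq: "(chr L \<circ> g) F = F" if "F \<in> topspace (PT L)" for F
  proof
    fix l show "(chr L \<circ> g) F l = F l"
      using that by (cases "l \<in> L") (simp_all add: chr_def g_def PiE_def extensional_def)
  qed
  have "continuous_map (PT L) (PT L) (chr L \<circ> g)"
    by (rule continuous_map_eq[OF continuous_map_id]) (metis eq id_apply)
  then have cm: "continuous_map (PT L) (powerset_top L) g"
    unfolding pt_eq by (rule continuous_map_pullback') (auto simp: g_def)
  have "compactin (PT L) (topspace (PT L))" using cs by (simp add: compact_space_def)
  then have c: "compactin (powerset_top L) (g ` topspace (PT L))"
    using cm by (rule image_compactin)
  have "Pow L \<subseteq> g ` topspace (PT L)"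
  proof
    fix x assume "x \<in> Pow L"
    then have "x = g (chr L x)" "chr L x \<in> topspace (PT L)" by (auto simp: g_def chr_def)
    then show "x \<in> g ` topspace (PT L)" by blast
  qed
  moreover have "g ` topspace (PT L) \<subseteq> Pow L" by (auto simp: g_def)
  ultimately have "g ` topspace (PT L) = Pow L" by blast
  then show ?thesis using c by (simp add: compact_space_def)
qed

lemma hausdorff_pt: "Hausdorff_space (powerset_top L)"
  unfolding Hausdorff_space_def topspace_pt
proof (intro allI impI)
  fix x y assume h: "x \<in> Pow L \<and> y \<in> Pow L \<and> x \<noteq> y"
  then obtain a where a: "a \<in> L" "(a \<in> x \<and> a \<notin> y) \<or> (a \<in> y \<and> a \<notin> x)" by blast
  have o1': "openin (powerset_top L) {z \<in> Pow L. {a} \<subseteq> z \<and> {} \<inter> z = {}}"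
    by (rule cyl_open) (use a in auto)
  have o2': "openin (powerset_top L) {z \<in> Pow L. {} \<subseteq> z \<and> {a} \<inter> z = {}}"
    by (rule cyl_open) (use a in auto)
  have e1: "{z \<in> Pow L. {a} \<subseteq> z \<and> {} \<inter> z = {}} = {z \<in> Pow L. a \<in> z}" by blast
  have e2: "{z \<in> Pow L. {} \<subseteq> z \<and> {a} \<inter> z = {}} = {z \<in> Pow L. a \<notin> z}" by blast
  have o1: "openin (powerset_top L) {z \<in> Pow L. a \<in> z}" using o1' e1 by simp
  have o2: "openin (powerset_top L) {z \<in> Pow L. a \<notin> z}" using o2' e2 by simp
  show "\<exists>U V. openin (powerset_top L) U \<and> openin (powerset_top L) V \<and> x \<in> U \<and> y \<in> V \<and> disjnt U V"
    using a(2)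
  proof
    assume "a \<in> x \<and> a \<notin> y" then show ?thesis using o1 o2 h by (intro exI[of _ "{z \<in> Pow L. a \<in> z}"] exI[of _ "{z \<in> Pow L. a \<notin> z}"]) (auto simp: disjnt_def)
  next
    assume "a \<in> y \<and> a \<notin> x" then show ?thesis using o1 o2 h by (intro exI[of _ "{z \<in> Pow L. a \<notin> z}"] exI[of _ "{z \<in> Pow L. a \<in> z}"]) (auto simp: disjnt_def)
  qed
qed

lemma prefix_iff: "prefix_of L r s cmp m l \<longleftrightarrow> l \<in> ext_set L r s cmp m"
  by (auto simp: prefix_of_def ext_set_def)

lemma PG:
  assumes "P_graph Q P L L0 r s cmp d"
  shows "countable L" "L0 \<subseteq> L" "\<forall>l\<in>L. r l \<in> L0 \<and> s l \<in> L0" "\<forall>v\<in>L0. r v = v \<and> s v = v"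
    "\<forall>m\<in>L. \<forall>n\<in>L. s m = r n \<longrightarrow> cmp m n \<in> L \<and> r (cmp m n) = r m \<and> s (cmp m n) = s n"
    "\<forall>l\<in>L. cmp (r l) l = l \<and> cmp l (s l) = l"
    "\<forall>a\<in>L. \<forall>b\<in>L. \<forall>c\<in>L. s a = r b \<and> s b = r c \<longrightarrow> cmp (cmp a b) c = cmp a (cmp b c)"
proof -
  note h = assms[unfolded P_graph_def]
  show "countable L" using h by (elim conjE)
  show "L0 \<subseteq> L" using h by (elim conjE)
  show "\<forall>l\<in>L. r l \<in> L0 \<and> s l \<in> L0" using h by (elim conjE)
  show "\<forall>v\<in>L0. r v = v \<and> s v = v" using h by (elim conjE)
  show "\<forall>m\<in>L. \<forall>n\<in>L. s m = r n \<longrightarrow> cmp m n \<in> L \<and> r (cmp m n) = r m \<and> s (cmp m n) = s n"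
    using h by (elim conjE)
  show "\<forall>l\<in>L. cmp (r l) l = l \<and> cmp l (s l) = l" using h by (elim conjE)
  show "\<forall>a\<in>L. \<forall>b\<in>L. \<forall>c\<in>L. s a = r b \<and> s b = r c \<longrightarrow> cmp (cmp a b) c = cmp a (cmp b c)"
    using h by (elim conjE)
qed

lemma ext_self:
  assumes "P_graph Q P L L0 r s cmp d" "l \<in> L"
  shows "l \<in> ext_set L r s cmp l"
proof -
  have "s l \<in> L0" using PG(3)[OF assms(1)] assms(2) by blast
  then have "s l \<in> L" "r (s l) = s l" using PG(2,4)[OF assms(1)] by blast+
  moreover have "cmp l (s l) = l" using PG(6)[OF assms(1)] assms(2) by blast
  ultimately show ?thesis unfolding ext_set_def by force
qed

lemma prefix_trans:
  assumes G: "P_graph Q P L L0 r s cmp d" and a: "a \<in> L"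
    and ab: "prefix_of L r s cmp a b" and bc: "prefix_of L r s cmp b c"
  shows "prefix_of L r s cmp a c"
proof -
  obtain n where n: "n \<in> L" "s a = r n" "b = cmp a n" using ab unfolding prefix_of_def by blast
  obtain m where m: "m \<in> L" "s b = r m" "c = cmp b m" using bc unfolding prefix_of_def by blast
  have sb: "s b = s n" "b \<in> L" using PG(5)[OF G] a n by auto
  have nm: "cmp n m \<in> L" "r (cmp n m) = r n" using PG(5)[OF G] n m sb by auto
  have "c = cmp (cmp a n) m" using m n by simp
  also have "\<dots> = cmp a (cmp n m)" using PG(7)[OF G] a n m sb by auto
  finally show ?thesis unfolding prefix_of_def using nm n by (intro bexI[of _ "cmp n m"]) auto
qed

lemma prefix_L:
  assumes G: "P_graph Q P L L0 r s cmp d" and a: "a \<in> L"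
    and ab: "prefix_of L r s cmp a b"
  shows "b \<in> L"
  using ab PG(5)[OF G] a unfolding prefix_of_def by auto

lemma key_K:
  assumes G: "P_graph Q P L L0 r s cmp d" and lam: "lam \<in> FA L r s cmp"
    and mu: "mu \<in> L" and nu: "nu \<in> L"
  shows "\<exists>K. finite K \<and> K \<subseteq> L \<and> (\<forall>k\<in>K. prefix_of L r s cmp mu k \<and> prefix_of L r s cmp nu k)
     \<and> (\<forall>y. is_filter L r s cmp y \<and> lam \<in> y \<and> mu \<in> y \<and> nu \<in> y \<longrightarrow> K \<inter> y \<noteq> {})"
proof -
  let ?E = "ext_set L r s cmp"
  let ?pf = "prefix_of L r s cmp"
  have lamL: "lam \<in> L" and fa: "fin_aligned_at L r s cmp lam"
    using lam unfolding FA_def by auto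
  have "lam \<in> ?E lam" using ext_self[OF G lamL] .
  then have "fin_aligned_pair L r s cmp lam mu" using fa mu unfolding fin_aligned_at_def by blast
  then obtain J1 where J1: "finite J1" "J1 \<subseteq> L" "?E lam \<inter> ?E mu = (\<Union>l\<in>J1. ?E l)"
    unfolding fin_aligned_pair_def by blast
  have jE: "j \<in> ?E lam \<inter> ?E mu" if "j \<in> J1" for j
    using ext_self[OF G, of j] that J1 by blast
  have "\<forall>j\<in>J1. \<exists>J. finite J \<and> J \<subseteq> L \<and> ?E j \<inter> ?E nu = (\<Union>l\<in>J. ?E l)"
  proof
    fix j assume j: "j \<in> J1"
    then have "fin_aligned_pair L r s cmp j nu" using fa nu jE[OF j] unfolding fin_aligned_at_def by blast
    then show "\<exists>J. finite J \<and> J \<subseteq> L \<and> ?E j \<inter> ?E nu = (\<Union>l\<in>J. ?E l)"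
      unfolding fin_aligned_pair_def by blast
  qed
  from bchoice[OF this] obtain JJ where JJ0: "\<forall>j\<in>J1. finite (JJ j) \<and> JJ j \<subseteq> L \<and> ?E j \<inter> ?E nu = (\<Union>l\<in>JJ j. ?E l)"
    by blast
  have JJ: "finite (JJ j) \<and> JJ j \<subseteq> L \<and> ?E j \<inter> ?E nu = (\<Union>l\<in>JJ j. ?E l)" if "j \<in> J1" for j
    using JJ0 that by blast
  define K where "K = {k \<in> (\<Union>j\<in>J1. JJ j). ?pf mu k \<and> ?pf nu k}"
  have "finite K"
  proof -
    have "finite (\<Union>j\<in>J1. JJ j)" by (rule finite_UN_I) (use J1(1) JJ in auto)
    then show ?thesis unfolding K_def by (rule finite_subset[rotated]) auto
  qed
  moreover have "K \<subseteq> L" unfolding K_def using JJ by blast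
  moreover have "\<forall>k\<in>K. ?pf mu k \<and> ?pf nu k" unfolding K_def by blast
  moreover have "K \<inter> y \<noteq> {}" if y: "is_filter L r s cmp y" "lam \<in> y" "mu \<in> y" "nu \<in> y" for y
  proof -
    have yL: "y \<subseteq> L" and her: "\<forall>l\<in>L. \<forall>m\<in>y. ?pf l m \<longrightarrow> l \<in> y"
      and dir: "\<forall>m\<in>y. \<forall>n\<in>y. \<exists>l\<in>y. ?pf m l \<and> ?pf n l"
      using y(1) unfolding is_filter_def by blast+
    obtain e1 where e1: "e1 \<in> y" "?pf lam e1" "?pf mu e1" using dir y by blast
    obtain e where e: "e \<in> y" "?pf e1 e" "?pf nu e" using dir y e1(1) by blast
    have "?pf lam e" using prefix_trans[OF G lamL e1(2) e(2)] .
    moreover have "?pf mu e" using prefix_trans[OF G mu e1(3) e(2)] .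
    ultimately have "e \<in> ?E lam \<inter> ?E mu" unfolding prefix_iff by blast
    then obtain j where j: "j \<in> J1" "e \<in> ?E j" using J1(3) by blast
    have "e \<in> ?E j \<inter> ?E nu" using j e(3) unfolding prefix_iff by blast
    then obtain k where k: "k \<in> JJ j" "e \<in> ?E k" using JJ[OF j(1)] by blast
    have kL: "k \<in> L" using k JJ[OF j(1)] by blast
    have "k \<in> ?E j \<inter> ?E nu" using JJ[OF j(1)] k(1) ext_self[OF G kL] by blast
    then have "?pf j k" "?pf nu k" unfolding prefix_iff by blast+
    moreover have "?pf mu j" using jE[OF j(1)] unfolding prefix_iff by blast
    ultimately have "?pf mu k" using prefix_trans[OF G mu] by blast
    then have "k \<in> K" unfolding K_def using k(1) j(1) \<open>?pf nu k\<close> by blast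
    moreover have "k \<in> y" using her kL e(1) k(2) unfolding prefix_iff by blast
    ultimately show ?thesis by blast
  qed
  ultimately show ?thesis by (intro exI[of _ K]) blast
qed

lemma filter_sub: "is_filter L r s cmp x \<Longrightarrow> x \<subseteq> L"
  unfolding is_filter_def by blast

lemma filter_her: "is_filter L r s cmp x \<Longrightarrow> l \<in> L \<Longrightarrow> m \<in> x \<Longrightarrow> prefix_of L r s cmp l m \<Longrightarrow> l \<in> x"
  unfolding is_filter_def by blast

lemma closed_B:
  assumes G: "P_graph Q P L L0 r s cmp d" and lam: "lam \<in> FA L r s cmp" and K1L: "K1 \<subseteq> L"
  shows "closedin (powerset_top L) {x \<in> filters L r s cmp. lam \<in> x \<and> K1 \<subseteq> x \<and> K2 \<inter> x = {}}"
    (is "closedin _ ?S")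
proof (rule closed_crit)
  let ?pf = "prefix_of L r s cmp"
  have lamL: "lam \<in> L" using lam unfolding FA_def by blast
  show "?S \<subseteq> Pow L" unfolding filters_def using filter_sub by blast
  fix x assume x: "x \<in> Pow L" "x \<notin> ?S"
  show "\<exists>K1' K2'. finite K1' \<and> finite K2' \<and> K1' \<subseteq> x \<and> K2' \<subseteq> L - x \<and>
           (\<forall>y\<in>Pow L. K1' \<subseteq> y \<and> K2' \<inter> y = {} \<longrightarrow> y \<notin> ?S)"
  proof (cases "lam \<in> x \<and> K1 \<subseteq> x \<and> K2 \<inter> x = {}")
    case False
    then consider "lam \<notin> x" | a where "a \<in> K1" "a \<notin> x" | a where "a \<in> K2" "a \<in> x" by blast
    then show ?thesis
    proof cases
      case 1
      have h: "\<forall>y\<in>Pow L. {} \<subseteq> y \<and> {lam} \<inter> y = {} \<longrightarrow> y \<notin> ?S" by auto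
      show ?thesis
        by (rule exI[of _ "{}"], rule exI[of _ "{lam}"]) (use 1 lamL h in simp)
    next
      case 2
      have "a \<in> L" using 2 K1L by blast
      have h: "\<forall>y\<in>Pow L. {} \<subseteq> y \<and> {a} \<inter> y = {} \<longrightarrow> y \<notin> ?S" using 2 by auto
      show ?thesis
        by (rule exI[of _ "{}"], rule exI[of _ "{a}"]) (use 2 h \<open>a \<in> L\<close> in simp)
    next
      case 3
      have h: "\<forall>y\<in>Pow L. {a} \<subseteq> y \<and> {} \<inter> y = {} \<longrightarrow> y \<notin> ?S" using 3 by auto
      show ?thesis
        by (rule exI[of _ "{a}"], rule exI[of _ "{}"]) (use 3 h in simp)
    qed
  next
    case True
    then have nf: "\<not> is_filter L r s cmp x" using x unfolding filters_def by blast
    have xne: "x \<noteq> {}" using True by blast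
    have "x \<subseteq> L" using x by blast
    then have "(\<exists>l\<in>L. \<exists>m\<in>x. ?pf l m \<and> l \<notin> x) \<or> (\<exists>m\<in>x. \<exists>n\<in>x. \<not>(\<exists>l\<in>x. ?pf m l \<and> ?pf n l))"
      using nf xne unfolding is_filter_def by blast
    then show ?thesis
    proof
      assume "\<exists>l\<in>L. \<exists>m\<in>x. ?pf l m \<and> l \<notin> x"
      then obtain l m where lm: "l \<in> L" "m \<in> x" "?pf l m" "l \<notin> x" by blast
      have h: "\<forall>y\<in>Pow L. {m} \<subseteq> y \<and> {l} \<inter> y = {} \<longrightarrow> y \<notin> ?S"
      proof (intro ballI impI)
        fix y assume y: "y \<in> Pow L" "{m} \<subseteq> y \<and> {l} \<inter> y = {}"
        show "y \<notin> ?S"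
        proof
          assume "y \<in> ?S"
          then have "is_filter L r s cmp y" by (simp add: filters_def)
          moreover have "m \<in> y" using y by simp
          ultimately have "l \<in> y" using filter_her[OF _ lm(1) _ lm(3)] by blast
          then show False using y by blast
        qed
      qed
      show ?thesis by (rule exI[of _ "{m}"], rule exI[of _ "{l}"]) (use lm h in simp)
    next
      assume "\<exists>m\<in>x. \<exists>n\<in>x. \<not>(\<exists>l\<in>x. ?pf m l \<and> ?pf n l)"
      then obtain mu nu where mn: "mu \<in> x" "nu \<in> x" "\<not>(\<exists>l\<in>x. ?pf mu l \<and> ?pf nu l)" by blast
      have muL: "mu \<in> L" and nuL: "nu \<in> L" using mn \<open>x \<subseteq> L\<close> by blast+
      obtain K where K: "finite K" "K \<subseteq> L" "\<forall>k\<in>K. ?pf mu k \<and> ?pf nu k"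
        "\<forall>y. is_filter L r s cmp y \<and> lam \<in> y \<and> mu \<in> y \<and> nu \<in> y \<longrightarrow> K \<inter> y \<noteq> {}"
        using key_K[OF G lam muL nuL] by (elim exE conjE) (rule that; assumption)
      have Kx: "K \<subseteq> L - x" using K(2,3) mn(3) by blast
      have h: "\<forall>y\<in>Pow L. {lam, mu, nu} \<subseteq> y \<and> K \<inter> y = {} \<longrightarrow> y \<notin> ?S"
      proof (intro ballI impI)
        fix y assume y: "y \<in> Pow L" "{lam, mu, nu} \<subseteq> y \<and> K \<inter> y = {}"
        show "y \<notin> ?S"
        proof
          assume "y \<in> ?S"
          then have "is_filter L r s cmp y" by (simp add: filters_def)
          moreover have "lam \<in> y \<and> mu \<in> y \<and> nu \<in> y" using y by simp
          ultimately have "K \<inter> y \<noteq> {}" using K(4) by blast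
          then show False using y by blast
        qed
      qed
      have hx: "{lam, mu, nu} \<subseteq> x" using True mn by blast
      show ?thesis
        by (rule exI[of _ "{lam, mu, nu}"], rule exI[of _ K]) (use K(1) Kx h hx in simp)
    qed
  qed
qed

lemma closed_sub_basis:
  assumes B: "has_countable_compact_basis T" and C: "closedin T C"
  shows "has_countable_compact_basis (subtopology T C)"
proof -
  obtain B where B1: "countable B" and B2: "\<forall>b\<in>B. openin T b \<and> compactin T b"
    and B3: "\<forall>U. openin T U \<longrightarrow> (\<forall>x\<in>U. \<exists>b\<in>B. x \<in> b \<and> b \<subseteq> U)"
    using B unfolding has_countable_compact_basis_def by (elim exE conjE) (rule that; assumption)
  define B' where "B' = (\<lambda>b. b \<inter> C) ` B"
  have "countable B'" unfolding B'_def using B1 by simp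
  moreover have "\<forall>b'\<in>B'. openin (subtopology T C) b' \<and> compactin (subtopology T C) b'"
  proof
    fix b' assume bB: "b' \<in> B'"
    obtain b where b: "b \<in> B" "b' = b \<inter> C" using bB unfolding B'_def by blast
    have ob: "openin T b" "compactin T b" using B2 b(1) by blast+
    have "openin (subtopology T C) b'" unfolding openin_subtopology using b(2) ob(1) by blast
    moreover have "compactin T (C \<inter> b)" using closed_Int_compactin[OF C ob(2)] .
    then have "compactin (subtopology T C) b'" unfolding compactin_subtopology using b
      by (simp add: Int_commute)
    ultimately show "openin (subtopology T C) b' \<and> compactin (subtopology T C) b'" by blast
  qed
  moreover have "\<forall>U. openin (subtopology T C) U \<longrightarrow> (\<forall>x\<in>U. \<exists>b'\<in>B'. x \<in> b' \<and> b' \<subseteq> U)"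
  proof (intro allI impI ballI)
    fix U x assume U: "openin (subtopology T C) U" "x \<in> U"
    obtain V where V: "openin T V" "U = V \<inter> C" using U(1) unfolding openin_subtopology by blast
    then have "x \<in> V" using U by blast
    then obtain b where b: "b \<in> B" "x \<in> b" "b \<subseteq> V" using B3 V(1) by blast
    have "b \<inter> C \<in> B'" unfolding B'_def using b(1) by blast
    moreover have "x \<in> b \<inter> C" "b \<inter> C \<subseteq> U" using b V U by blast+
    ultimately show "\<exists>b'\<in>B'. x \<in> b' \<and> b' \<subseteq> U" by blast
  qed
  ultimately show ?thesis unfolding has_countable_compact_basis_def by (intro exI[of _ B'] conjI)
qed

definition Bset :: "'a set \<Rightarrow> ('a \<Rightarrow> 'a) \<Rightarrow> ('a \<Rightarrow> 'a) \<Rightarrow> ('a \<Rightarrow> 'a \<Rightarrow> 'a) \<Rightarrow> 'a \<Rightarrow> 'a set \<Rightarrow> 'a set \<Rightarrow> 'a set set" where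
  "Bset L r s cmp lam K1 K2 = {x \<in> filters L r s cmp. lam \<in> x \<and> K1 \<subseteq> x \<and> K2 \<inter> x = {}}"

lemma path_basis:
  assumes G: "P_graph Q P L L0 r s cmp d"
  shows "has_countable_compact_basis (subtopology (powerset_top L) (path_space L r s cmp))"
proof -
  let ?X = "path_space L r s cmp"
  let ?T = "subtopology (powerset_top L) ?X"
  let ?F = "{K. finite K \<and> K \<subseteq> L}"
  define B where "B = (\<lambda>(lam, K1, K2). Bset L r s cmp lam K1 K2) ` (FA L r s cmp \<times> ?F \<times> ?F)"
  have cL: "countable L" using PG(1)[OF G] .
  have "FA L r s cmp \<subseteq> L" unfolding FA_def by blast
  then have "countable (FA L r s cmp)" using cL countable_subset by blast
  moreover have "countable ?F" using countable_Collect_finite_subset[OF cL] .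
  ultimately have "countable (FA L r s cmp \<times> ?F \<times> ?F)" by simp
  then have "countable B" unfolding B_def by simp
  moreover have "\<forall>b\<in>B. openin ?T b \<and> compactin ?T b"
  proof
    fix b assume bB: "b \<in> B"
    obtain t where t: "t \<in> FA L r s cmp \<times> ?F \<times> ?F" "b = (\<lambda>(lam, K1, K2). Bset L r s cmp lam K1 K2) t"
      using bB unfolding B_def by (rule imageE)
    obtain lam K1 K2 where tt: "t = (lam, K1, K2)" by (cases t)
    have p: "lam \<in> FA L r s cmp" "finite K1" "K1 \<subseteq> L" "finite K2" "K2 \<subseteq> L"
      "b = Bset L r s cmp lam K1 K2" using t unfolding tt by auto
    have lamL: "lam \<in> L" using p(1) unfolding FA_def by blast
    have bX: "b \<subseteq> ?X" unfolding p(6) Bset_def path_space_def using p(1) by blast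
    have o: "openin (powerset_top L) {y \<in> Pow L. insert lam K1 \<subseteq> y \<and> K2 \<inter> y = {}}"
      by (rule cyl_open) (use p lamL in auto)
    have "b = {y \<in> Pow L. insert lam K1 \<subseteq> y \<and> K2 \<inter> y = {}} \<inter> ?X"
    proof
      show "b \<subseteq> {y \<in> Pow L. insert lam K1 \<subseteq> y \<and> K2 \<inter> y = {}} \<inter> ?X"
      proof
        fix y assume y: "y \<in> b"
        then have "y \<in> filters L r s cmp" "lam \<in> y" "K1 \<subseteq> y" "K2 \<inter> y = {}"
          unfolding p(6) Bset_def by blast+
        moreover then have "y \<subseteq> L" using filter_sub unfolding filters_def by blast
        ultimately show "y \<in> {y \<in> Pow L. insert lam K1 \<subseteq> y \<and> K2 \<inter> y = {}} \<inter> ?X"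
          using bX y by blast
      qed
      show "{y \<in> Pow L. insert lam K1 \<subseteq> y \<and> K2 \<inter> y = {}} \<inter> ?X \<subseteq> b"
        unfolding p(6) Bset_def path_space_def by blast
    qed
    then have "openin ?T b" unfolding openin_subtopology using o by blast
    moreover have "closedin (powerset_top L) b" unfolding p(6) Bset_def
      by (rule closed_B[OF G p(1) p(3)])
    then have "compactin (powerset_top L) b" by (rule closedin_compact_space[OF compact_pt])
    then have "compactin ?T b" unfolding compactin_subtopology using bX by blast
    ultimately show "openin ?T b \<and> compactin ?T b" by blast
  qed
  moreover have "\<forall>U. openin ?T U \<longrightarrow> (\<forall>x\<in>U. \<exists>b\<in>B. x \<in> b \<and> b \<subseteq> U)"
  proof (intro allI impI ballI)
    fix U x assume U: "openin ?T U" "x \<in> U"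
    obtain V where V: "openin (powerset_top L) V" "U = V \<inter> ?X" using U(1) unfolding openin_subtopology by blast
    have xV: "x \<in> V" and xX: "x \<in> ?X" using U V by blast+
    obtain K1 K2 where K: "finite K1" "finite K2" "K1 \<subseteq> x" "K2 \<subseteq> L - x"
      "\<forall>y\<in>Pow L. K1 \<subseteq> y \<and> K2 \<inter> y = {} \<longrightarrow> y \<in> V"
      using basis_extract[OF V(1) xV] by (elim exE conjE) (rule that; assumption)
    have xF: "x \<in> filters L r s cmp" using xX unfolding path_space_def by blast
    obtain lam where lam: "lam \<in> x" "lam \<in> FA L r s cmp" using xX unfolding path_space_def by blast
    have xL: "x \<subseteq> L" using xF filter_sub unfolding filters_def by blast
    have "Bset L r s cmp lam K1 K2 \<in> B" unfolding B_def
      by (rule image_eqI[of _ _ "(lam, K1, K2)"]) (use lam K xL in auto)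
    moreover have "x \<in> Bset L r s cmp lam K1 K2" unfolding Bset_def using xF lam K by blast
    moreover have "Bset L r s cmp lam K1 K2 \<subseteq> U"
    proof
      fix y assume y: "y \<in> Bset L r s cmp lam K1 K2"
      then have yF: "y \<in> filters L r s cmp" and yl: "lam \<in> y" "K1 \<subseteq> y" "K2 \<inter> y = {}"
        unfolding Bset_def by blast+
      have "y \<subseteq> L" using yF filter_sub unfolding filters_def by blast
      then have "y \<in> V" using K(5) yl by blast
      moreover have "y \<in> ?X" unfolding path_space_def using yF yl lam by blast
      ultimately show "y \<in> U" using V by blast
    qed
    ultimately show "\<exists>b\<in>B. x \<in> b \<and> b \<subseteq> U" by blast
  qed
  ultimately show ?thesis unfolding has_countable_compact_basis_def by (intro exI[of _ B] conjI)
qed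

lemma path_open:
  "openin (subtopology (powerset_top L) (filters L r s cmp)) (path_space L r s cmp)"
proof -
  define T where "T = (\<Union>l\<in>FA L r s cmp. {y \<in> Pow L. {l} \<subseteq> y \<and> {} \<inter> y = {}})"
  have "openin (powerset_top L) T" unfolding T_def
  proof (rule openin_Union, clarify)
    fix l assume "l \<in> FA L r s cmp"
    then have "l \<in> L" unfolding FA_def by blast
    then show "openin (powerset_top L) {y \<in> Pow L. {l} \<subseteq> y \<and> {} \<inter> y = {}}"
      by (intro cyl_open) auto
  qed
  moreover have "path_space L r s cmp = T \<inter> filters L r s cmp"
  proof
    show "path_space L r s cmp \<subseteq> T \<inter> filters L r s cmp"
    proof
      fix x assume x: "x \<in> path_space L r s cmp"
      then have xF: "x \<in> filters L r s cmp" unfolding path_space_def by blast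
      then have "x \<subseteq> L" using filter_sub unfolding filters_def by blast
      moreover obtain l where "l \<in> x" "l \<in> FA L r s cmp" using x unfolding path_space_def by blast
      ultimately show "x \<in> T \<inter> filters L r s cmp" unfolding T_def using xF by blast
    qed
    show "T \<inter> filters L r s cmp \<subseteq> path_space L r s cmp"
      unfolding T_def path_space_def by blast
  qed
  ultimately show ?thesis unfolding openin_subtopology by blast
qed

theorem theorem4p9:
  fixes Q :: "('g, 'z) monoid_scheme" and P :: "'g set"
    and L L0 :: "'a set" and r s :: "'a \<Rightarrow> 'a" and cmp :: "'a \<Rightarrow> 'a \<Rightarrow> 'a"
    and d :: "'a \<Rightarrow> 'g"
  assumes "wqlo Q P"
    and "P_graph Q P L L0 r s cmp d"
    and "FA L r s cmp \<noteq> {}"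
  shows "Hausdorff_space (subtopology (powerset_top L) (path_space L r s cmp))
    \<and> has_countable_compact_basis (subtopology (powerset_top L) (path_space L r s cmp))
    \<and> Hausdorff_space (subtopology (powerset_top L) (boundary_path_space L r s cmp))
    \<and> has_countable_compact_basis (subtopology (powerset_top L) (boundary_path_space L r s cmp))
    \<and> openin (subtopology (powerset_top L) (filters L r s cmp)) (path_space L r s cmp)"
proof -
  let ?X = "path_space L r s cmp"
  let ?T = "subtopology (powerset_top L) ?X"
  let ?D = "boundary_path_space L r s cmp"
  have h1: "Hausdorff_space ?T" by (rule Hausdorff_space_subtopology[OF hausdorff_pt])
  have h2: "has_countable_compact_basis ?T" by (rule path_basis[OF assms(2)])
  have h3: "Hausdorff_space (subtopology (powerset_top L) ?D)" by (rule Hausdorff_space_subtopology[OF hausdorff_pt])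
  have cD: "closedin ?T ?D" unfolding boundary_path_space_def by (rule closedin_closure_of)
  have "?D \<subseteq> topspace ?T" unfolding boundary_path_space_def by (rule closure_of_subset_topspace)
  then have "?D \<subseteq> ?X" by simp
  then have eq: "subtopology ?T ?D = subtopology (powerset_top L) ?D"
    by (simp add: subtopology_subtopology Int_absorb1)
  have h4: "has_countable_compact_basis (subtopology (powerset_top L) ?D)"
    using closed_sub_basis[OF h2 cD] eq by simp
  have h5: "openin (subtopology (powerset_top L) (filters L r s cmp)) ?X" by (rule path_open)
  show ?thesis using h1 h2 h3 h4 h5 by blast
qed

end
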